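(* Let $n,k$ be integers with $1\le k$ and $n\ge k+2$. For real constants $c_0,\dots,c_{n-1}$ and an ordered bid vector $b_1\ge b_2\ge\dots\ge b_n\ge 0$, define for $i=1,\dots,n$ $$r_i=c_0+c_1b_1+\dots+c_{i-1}b_{i-1}+c_ib_{i+1}+\dots+c_{n-1}b_n.$$ Consider the optimization problem: maximize $f$ over $(f,c_0,\dots,c_{n-1})\in\mathbb{R}^{n+1}$ subject to, for every ordered bid vector $b_1\ge\dots\ge b_n\ge 0$: (i) $r_n\ge 0$; (ii) $\sum_{i=1}^n r_i\le k\,b_k$; (iii) $\sum_{i=1}^k r_i\ge f\cdot k\,b_{k+1}$. Then this problem has a unique optimal solution, namely $f^*=\frac{k}{n}$, $c_k^*=\frac{k}{n}$ and $c_i^*=0$ for all $i\ne k$. In particular the optimal worst-case fraction redistributed to the $k$ confirmed users is $k/n$, and the resulting mechanism (R-TFRM) is unique.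
   Context: Interpretation: in a block with $n$ included transactions whose bids are $b_1\ge\dots\ge b_n$, the top $k$ are confirmed and each pays $b_{k+1}$ minus the rebate $r_i$; included unconfirmed users pay $-r_i$. Constraint (i) encodes user individual rationality, (ii) an approximate miner individual rationality (total rebate at most $k\,b_k$), and (iii) that at least the fraction $f$ of the VCG payment $k\,b_{k+1}$ is returned to the confirmed users. *)

theory Defs
  imports Main Complex_Main
begin

text \<open>Bids are indexed 1..n (b i for i in {1..n}); constants c are indexed 0..n-1.\<close>

definition ordered_bids :: "nat \<Rightarrow> (nat \<Rightarrow> real) \<Rightarrow> bool" where
  "ordered_bids n b \<longleftrightarrow> (\<forall>i. 1 \<le> i \<and> i < n \<longrightarrow> b i \<ge> b (Suc i)) \<and> b n \<ge> 0"

definition rebate :: "nat \<Rightarrow> (nat \<Rightarrow> real) \<Rightarrow> (nat \<Rightarrow> real) \<Rightarrow> nat \<Rightarrow> real" where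
  "rebate n c b i = c 0 + (\<Sum>j\<in>{1..<i}. c j * b j) + (\<Sum>j\<in>{i..<n}. c j * b (Suc j))"

definition feasible :: "nat \<Rightarrow> nat \<Rightarrow> real \<Rightarrow> (nat \<Rightarrow> real) \<Rightarrow> bool" where
  "feasible n k f c \<longleftrightarrow> (\<forall>b. ordered_bids n b \<longrightarrow>
      rebate n c b n \<ge> 0 \<and>
      (\<Sum>i\<in>{1..n}. rebate n c b i) \<le> real k * b k \<and>
      (\<Sum>i\<in>{1..k}. rebate n c b i) \<ge> f * (real k * b (Suc k)))"

definition optimal :: "nat \<Rightarrow> nat \<Rightarrow> real \<Rightarrow> (nat \<Rightarrow> real) \<Rightarrow> bool" where
  "optimal n k f c \<longleftrightarrow> feasible n k f c \<and> (\<forall>f' c'. feasible n k f' c' \<longrightarrow> f' \<le> f)"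

end

theory Submission
  imports Defs
begin

definition stp :: "nat \<Rightarrow> nat \<Rightarrow> real" where
  "stp m j = (if j \<le> m then 1 else 0)"

definition SS :: "(nat \<Rightarrow> real) \<Rightarrow> nat \<Rightarrow> real" where
  "SS c t = c 0 + (\<Sum>j\<in>{1..t}. c j)"

lemma ord_stp: "ordered_bids n (stp m)"
  unfolding ordered_bids_def stp_def by auto

lemma rebate_step:
  assumes "1 \<le> i" "i \<le> n" "m \<le> n"
  shows "rebate n c (stp m) i = (if i \<le> m then SS c (m-1) else SS c m)"
proof (cases "i \<le> m")
  case True
  have a: "(\<Sum>j\<in>{1..<i}. c j * stp m j) = (\<Sum>j\<in>{1..<i}. c j)"
    by (rule sum.cong) (use True in \<open>auto simp: stp_def\<close>)
  have b: "(\<Sum>j\<in>{i..<n}. c j * stp m (Suc j)) = (\<Sum>j\<in>{i..<m}. c j * stp m (Suc j)) + (\<Sum>j\<in>{m..<n}. c j * stp m (Suc j))"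
    using True assms by (simp add: sum.atLeastLessThan_concat)
  have b1: "(\<Sum>j\<in>{i..<m}. c j * stp m (Suc j)) = (\<Sum>j\<in>{i..<m}. c j)"
    by (rule sum.cong) (auto simp: stp_def)
  have b2: "(\<Sum>j\<in>{m..<n}. c j * stp m (Suc j)) = 0"
    by (rule sum.neutral) (auto simp: stp_def)
  have d: "(\<Sum>j\<in>{1..<i}. c j) + (\<Sum>j\<in>{i..<m}. c j) = (\<Sum>j\<in>{1..<m}. c j)"
    using True assms by (simp add: sum.atLeastLessThan_concat)
  have e: "{1..<m} = {1..m-1}" using True assms by auto
  have d': "(\<Sum>j\<in>{1..<i}. c j) + (\<Sum>j\<in>{i..<m}. c j) = (\<Sum>j\<in>{1..m-1}. c j)"
    using d e by simp
  show ?thesis using True unfolding rebate_def SS_def a b b1 b2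
    by (simp only: add.assoc d' if_True add_0_right)
next
  case False
  have a: "(\<Sum>j\<in>{1..<i}. c j * stp m j) = (\<Sum>j\<in>{1..<m+1}. c j * stp m j) + (\<Sum>j\<in>{m+1..<i}. c j * stp m j)"
    by (rule sum.atLeastLessThan_concat[symmetric]) (use False in auto)
  have a1: "(\<Sum>j\<in>{1..<m+1}. c j * stp m j) = (\<Sum>j\<in>{1..m}. c j)"
    by (rule sum.cong) (auto simp: stp_def)
  have a2: "(\<Sum>j\<in>{m+1..<i}. c j * stp m j) = 0"
    by (rule sum.neutral) (auto simp: stp_def)
  have b: "(\<Sum>j\<in>{i..<n}. c j * stp m (Suc j)) = 0"
    by (rule sum.neutral) (use False in \<open>auto simp: stp_def\<close>)
  show ?thesis using False unfolding rebate_def SS_def a a1 a2 b by simp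
qed

lemma sum_if_le:
  "(\<Sum>i\<in>{1..N}. if i \<le> m then A else B) = real (min m N) * A + real (N - m) * (B::real)"
proof (induction N)
  case 0
  then show ?case by simp
next
  case (Suc N)
  show ?case
  proof (cases "m \<le> N")
    case True
    then show ?thesis using Suc by (simp add: Suc_diff_le algebra_simps)
  next
    case False
    then have "m = Suc N \<or> m > Suc N" by auto
    then show ?thesis using Suc by (auto simp: algebra_simps min_def)
  qed
qed

lemma SS_0: "SS c 0 = c 0" by (simp add: SS_def)
lemma SS_Suc: "SS c (Suc t) = SS c t + c (Suc t)" by (simp add: SS_def)

lemma feas_step:
  assumes fe: "feasible n k f c" and k: "1 \<le> k" "k + 2 \<le> n" and m: "m \<le> n"
  shows "(if n \<le> m then SS c (m-1) else SS c m) \<ge> 0"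
    and "real (min m n) * SS c (m-1) + real (n-m) * SS c m \<le> real k * stp m k"
    and "real (min m k) * SS c (m-1) + real (k-m) * SS c m \<ge> f * (real k * stp m (Suc k))"
proof -
  have F: "rebate n c (stp m) n \<ge> 0 \<and>
      (\<Sum>i\<in>{1..n}. rebate n c (stp m) i) \<le> real k * stp m k \<and>
      (\<Sum>i\<in>{1..k}. rebate n c (stp m) i) \<ge> f * (real k * stp m (Suc k))"
    using fe ord_stp unfolding feasible_def by blast
  have s1: "(\<Sum>i\<in>{1..n}. rebate n c (stp m) i) = (\<Sum>i\<in>{1..n}. if i \<le> m then SS c (m-1) else SS c m)"
    by (rule sum.cong) (use m in \<open>auto simp: rebate_step\<close>)
  have s2: "(\<Sum>i\<in>{1..k}. rebate n c (stp m) i) = (\<Sum>i\<in>{1..k}. if i \<le> m then SS c (m-1) else SS c m)"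
    by (rule sum.cong) (use m k in \<open>auto simp: rebate_step\<close>)
  show "(if n \<le> m then SS c (m-1) else SS c m) \<ge> 0"
    using F rebate_step[of n n m c] m k by simp
  show "real (min m n) * SS c (m-1) + real (n-m) * SS c m \<le> real k * stp m k"
    using F s1 sum_if_le by simp
  show "real (min m k) * SS c (m-1) + real (k-m) * SS c m \<ge> f * (real k * stp m (Suc k))"
    using F s2 sum_if_le by simp
qed

lemma feas_main:
  assumes fe: "feasible n k f c" and k: "1 \<le> k" "k + 2 \<le> n"
  shows "f \<le> real k / real n"
    and "f = real k / real n \<Longrightarrow> (\<forall>i<n. c i = (if i = k then real k / real n else 0))"
proof -
  have nn: "\<And>t. t < n \<Longrightarrow> SS c t \<ge> 0"
    using feas_step(1)[OF fe k] by (metis less_imp_le not_le)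
  have z: "t < k \<Longrightarrow> SS c t = 0" for t
  proof (induction t)
    case 0
    have "real n * SS c 0 \<le> 0" using feas_step(2)[OF fe k, of 0] k by (simp add: stp_def)
    then have "SS c 0 \<le> 0" using k by (simp add: mult_le_0_iff)
    then show ?case using nn[of 0] k by simp
  next
    case (Suc t)
    have "real (Suc t) * SS c t + real (n - Suc t) * SS c (Suc t) \<le> 0"
      using feas_step(2)[OF fe k, of "Suc t"] k Suc.prems by (simp add: stp_def)
    then have "real (n - Suc t) * SS c (Suc t) \<le> 0" using Suc by simp
    moreover have "real (n - Suc t) > 0" using Suc.prems k by simp
    ultimately have "SS c (Suc t) \<le> 0" by (simp add: mult_le_0_iff)
    then show ?case using nn[of "Suc t"] k Suc.prems by simp
  qed
  have ge: "k \<le> t \<Longrightarrow> t < n \<Longrightarrow> SS c t \<ge> f" for t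
  proof -
    assume a: "k \<le> t" "t < n"
    have "real k * SS c t \<ge> f * real k"
      using feas_step(3)[OF fe k, of "Suc t"] a by (simp add: stp_def min_def)
    then show ?thesis using k by simp
  qed
  have key: "real t * SS c (t-1) + real (n-t) * SS c t \<le> real k"
    if "k + 1 \<le> t" "t < n" for t
    using feas_step(2)[OF fe k, of t] that by (simp add: stp_def min_def)
  have low: "real t * SS c (t-1) + real (n-t) * SS c t \<ge> real n * f"
    if "k + 1 \<le> t" "t < n" for t
  proof -
    have "real t * SS c (t-1) \<ge> real t * f" using ge[of "t-1"] that by (intro mult_left_mono) auto
    moreover have "real (n-t) * SS c t \<ge> real (n-t) * f" using ge[of t] that by (intro mult_left_mono) auto
    moreover have "real t + real (n-t) = real n" using that by simp
    ultimately show ?thesis by (metis add_mono distrib_right)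
  qed
  have "real n * f \<le> real k" using key[of "k+1"] low[of "k+1"] k by simp
  then show "f \<le> real k / real n" using k by (simp add: field_simps)
  assume fk: "f = real k / real n"
  have eq: "SS c t = real k / real n" if "k \<le> t" "t < n" for t
  proof -
    have "t + 1 < n \<or> t + 1 = n" using that by auto
    then show ?thesis
    proof
      assume t1: "t + 1 < n"
      have A: "real (Suc t) * SS c t \<ge> real (Suc t) * f" using ge[of t] that by (intro mult_left_mono) auto
      have B: "real (n - Suc t) * SS c (Suc t) \<ge> real (n - Suc t) * f" using ge[of "Suc t"] that t1 by (intro mult_left_mono) auto
      have C: "real (Suc t) * f + real (n - Suc t) * f = real k"
        using fk t1 k by (simp add: field_simps of_nat_diff)
      have "real (Suc t) * SS c t + real (n - Suc t) * SS c (Suc t) \<le> real k"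
        using key[of "Suc t"] that t1 by simp
      then have "real (Suc t) * SS c t = real (Suc t) * f" using A B C by linarith
      then have "SS c t = f" by simp
      then show ?thesis using fk by simp
    next
      assume t1: "t + 1 = n"
      have A: "real t * SS c (t-1) \<ge> real t * f" using ge[of "t-1"] that t1 k by (intro mult_left_mono) auto
      have B: "real (n - t) * SS c t \<ge> real (n - t) * f" using ge[of t] that by (intro mult_left_mono) auto
      have C: "real t * f + real (n - t) * f = real k"
        using fk t1 k by (simp add: field_simps of_nat_diff)
      have "real t * SS c (t-1) + real (n - t) * SS c t \<le> real k"
        using key[of t] that t1 k by simp
      then have "real (n - t) * SS c t = real (n - t) * f" using A B C by linarith
      then have "SS c t = f" using t1 by simp
      then show ?thesis using fk by simp
    qed
  qed
  show "\<forall>i<n. c i = (if i = k then real k / real n else 0)"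
  proof (intro allI impI)
    fix i assume i: "i < n"
    show "c i = (if i = k then real k / real n else 0)"
    proof (cases i)
      case 0
      then show ?thesis using z[of 0] k SS_0[of c] by simp
    next
      case (Suc j)
      have ci: "c i = SS c i - SS c j" using SS_Suc[of c j] Suc by simp
      consider "i < k" | "i = k" | "i > k" by linarith
      then show ?thesis
      proof cases
        case 1 then show ?thesis using ci z[of i] z[of j] Suc by simp
      next
        case 2 then show ?thesis using ci z[of j] eq[of i] Suc i by simp
      next
        case 3 then show ?thesis using ci eq[of i] eq[of j] Suc i by simp
      qed
    qed
  qed
qed

lemma cand_feasible_gen:
  assumes k: "1 \<le> k" "k + 2 \<le> n"
    and c: "\<forall>i<n. c i = (if i = k then real k / real n else 0)"
  shows "feasible n k (real k / real n) c"
  unfolding feasible_def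
proof (intro allI impI)
  fix b assume ob: "ordered_bids n b"
  let ?q = "real k / real n"
  have r: "rebate n c b i = (if k < i then ?q * b k else ?q * b (Suc k))" if i: "1 \<le> i" "i \<le> n" for i
  proof -
    have s1: "(\<Sum>j\<in>{1..<i}. c j * b j) = (\<Sum>j\<in>{1..<i}. if j = k then ?q * b k else 0)"
      by (rule sum.cong) (use c i in auto)
    have s2: "(\<Sum>j\<in>{i..<n}. c j * b (Suc j)) = (\<Sum>j\<in>{i..<n}. if j = k then ?q * b (Suc k) else 0)"
      by (rule sum.cong) (use c i in auto)
    have c0: "c 0 = 0" using c k by simp
    show ?thesis unfolding rebate_def s1 s2 c0 using k i by (auto simp: sum.delta)
  qed
  have mono: "b (Suc k) \<le> b k" using ob k unfolding ordered_bids_def by simp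
  have nonneg: "\<forall>j. k \<le> j \<longrightarrow> j \<le> n \<longrightarrow> b j \<ge> 0"
  proof (intro allI impI)
    fix j assume "k \<le> j" "j \<le> n"
    then show "b j \<ge> 0"
    proof (induction "n - j" arbitrary: j)
      case 0 then show ?case using ob unfolding ordered_bids_def by simp
    next
      case (Suc x)
      have "b (Suc j) \<ge> 0" using Suc by simp
      moreover have "b j \<ge> b (Suc j)" using ob Suc.prems Suc.hyps k unfolding ordered_bids_def by simp
      ultimately show ?case by simp
    qed
  qed
  have bk: "b k \<ge> 0" using nonneg k by simp
  have qn: "?q \<ge> 0" by simp
  have t1: "rebate n c b n \<ge> 0" using r[of n] k bk by simp
  have sumn: "(\<Sum>i\<in>{1..n}. rebate n c b i) = (\<Sum>i\<in>{1..n}. if i \<le> k then ?q * b (Suc k) else ?q * b k)"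
    by (rule sum.cong) (auto simp: r)
  have sumk: "(\<Sum>i\<in>{1..k}. rebate n c b i) = (\<Sum>i\<in>{1..k}. if i \<le> k then ?q * b (Suc k) else ?q * b k)"
    by (rule sum.cong) (use k in \<open>auto simp: r\<close>)
  have "(\<Sum>i\<in>{1..n}. rebate n c b i) = real k * (?q * b (Suc k)) + real (n - k) * (?q * b k)"
    unfolding sumn sum_if_le using k by simp
  also have "\<dots> \<le> real k * (?q * b k) + real (n - k) * (?q * b k)"
    using mono qn by (intro add_right_mono mult_left_mono) auto
  also have "\<dots> = real k * b k" using k by (simp add: field_simps of_nat_diff)
  finally have t2: "(\<Sum>i\<in>{1..n}. rebate n c b i) \<le> real k * b k" .
  have t3: "(\<Sum>i\<in>{1..k}. rebate n c b i) = ?q * (real k * b (Suc k))"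
    unfolding sumk sum_if_le by simp
  show "rebate n c b n \<ge> 0 \<and> (\<Sum>i\<in>{1..n}. rebate n c b i) \<le> real k * b k \<and>
      (\<Sum>i\<in>{1..k}. rebate n c b i) \<ge> ?q * (real k * b (Suc k))"
    using t1 t2 t3 by simp
qed

lemma cand_feasible:
  assumes "1 \<le> k" "k + 2 \<le> n"
  shows "feasible n k (real k / real n) (\<lambda>i. if i = k then real k / real n else 0)"
  using cand_feasible_gen[OF assms] by simp

theorem theorem4:
  fixes n k :: nat and f :: real and c :: "nat \<Rightarrow> real"
  assumes "1 \<le> k" and "k + 2 \<le> n"
  shows "optimal n k f c \<longleftrightarrow>
           (f = real k / real n \<and> (\<forall>i<n. c i = (if i = k then real k / real n else 0)))"
proof
  assume o: "optimal n k f c"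
  then have fe: "feasible n k f c" by (simp add: optimal_def)
  have "feasible n k (real k / real n) (\<lambda>i. if i = k then real k / real n else 0)"
    by (rule cand_feasible[OF assms])
  then have "real k / real n \<le> f" using o unfolding optimal_def by blast
  then have "f = real k / real n" using feas_main(1)[OF fe assms] by simp
  then show "f = real k / real n \<and> (\<forall>i<n. c i = (if i = k then real k / real n else 0))"
    using feas_main(2)[OF fe assms] by simp
next
  assume h: "f = real k / real n \<and> (\<forall>i<n. c i = (if i = k then real k / real n else 0))"
  have "feasible n k f c"
    using cand_feasible_gen[OF assms, of c] h by simp
  then show "optimal n k f c" unfolding optimal_def
    using feas_main(1)[OF _ assms] h by blast
qed

end
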